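(* Let $\mathcal K$ (UAVs) and $\mathcal I$ (subscribers) be finite sets. Fix $H>0$, $\sigma^2>0$, $\omega_{ij}>0$, transmit powers $p_j\ge 0$, subscriber positions $s_i\in\mathbb R^2$, previous UAV positions $\bar q_k\in\mathbb R^2$, association indicators $c_{ik}\in\{0,1\}$ with $\sum_kc_{ik}\le1$, $\sum_ic_{ik}\le 1$, constants $L>0$, $B>0$, $V\rho_1\ge0$, nonnegative weights $a_i$, and positive constants $R_{\rm cov}$, $d_{\min}$, $s_{\max}$. For UAV positions $q=(q_k)_{k\in\mathcal K}$, $q_k\in\mathbb R^2$, let $h_{ij}(q)=\omega_{ij}/(H^2+\|q_j-s_i\|^2)$ and $r_i(q)=\sum_kc_{ik}\log_2\big(1+\frac{p_kh_{ik}(q)}{\sigma^2+\sum_{j\ne k}p_jh_{ij}(q)}\big)$. Problem (T): maximize $\Psi(q)=\sum_ia_ir_i(q)-V\rho_1\sum_i\frac{L}{B\,r_i(q)}$ (with $L/(B\cdot0)=+\infty$) subject to $\|q_k-s_i\|\le R_{\rm cov}$ for all $i,k$; $\|q_k-q_j\|^2\ge d_{\min}^2$ for all $k\ne j$; $\|q_k-\bar q_k\|^2\le s_{\max}^2$ for all $k$. Let $\mathrm{OPT}_T$ be the supremum of $\Psi$ over this feasible set. Fix a local point $q^{(r)}$ and define $d^{(r)}_{ij}=H^2+\|q^{(r)}_j-s_i\|^2$, $D^{(r)}_i=\log_2(\sigma^2+\sum_jp_j\omega_{ij}/d^{(r)}_{ij})$, $E^{(r)}_{ij}=p_j\omega_{ij}/\big((d^{(r)}_{ij})^2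 2^{D^{(r)}_i}\ln2\big)$, $\tilde\Lambda_{ik}(b)=-\log_2(\sigma^2+\sum_{j\ne k}p_j\omega_{ij}/(H^2+b_{ij}))$. Problem (C): maximize $\sum_ia_i\eta_i-V\rho_1\sum_i\xi_i$ over $q$, $\eta=(\eta_i)$, $\xi=(\xi_i)$, $b=(b_{ij})$ with $b_{ij}>-H^2$, subject to: $\xi_i\ge0$, $\eta_i\ge0$, $\xi_i\eta_i\ge L/B$ for all $i$; for all $i$, $\sum_kc_{ik}\big(D^{(r)}_i-\sum_jE^{(r)}_{ij}(\|q_j-s_i\|^2-\|q^{(r)}_j-s_i\|^2)\big)+\sum_kc_{ik}\tilde\Lambda_{ik}(b)\ge\eta_i$; for all $i,j$: $-\|q^{(r)}_j-s_i\|^2+2(q^{(r)}_j-s_i)^{\rm T}(q_j-s_i)\ge b_{ij}$; for all $k\ne j$: $-\|q^{(r)}_k-q^{(r)}_j\|^2+2(q^{(r)}_k-q^{(r)}_j)^{\rm T}(q_k-q_j)\ge d_{\min}^2$; $\|q_k-s_i\|\le R_{\rm cov}$ for all $i,k$; $\|q_k-\bar q_k\|\le s_{\max}$ for all $k$. Let $\mathrm{OPT}_C$ be the supremum of the objective of (C) ($-\infty$ if infeasible). Then $\mathrm{OPT}_C\le\mathrm{OPT}_T$, i.e., the optimal value of (C) is a lower bound on the optimal value of (T).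
   Context: Problem (T) is the per-slot UAV trajectory subproblem of a Lyapunov drift-plus-penalty scheme for multi-UAV video delivery, with fixed association and fixed powers: UAVs fly at common altitude $H$, $q_k$ is UAV $k$'s horizontal position in the current slot and $\bar q_k$ in the previous slot, $R_{\rm cov}$ is the line-of-sight coverage radius (written $H\tan^{-1}\theta$ in the paper), $d_{\min}$ the minimum inter-UAV safety distance, $s_{\max}$ the maximum per-slot flight distance. In the paper $a_i=[X_i(t)]^++[Z_i(t)]^+$ (virtual queue backlogs, $[x]^+=\max\{x,0\}$), $L$ is video data length per slot and $B$ the bandwidth. *)

theory Defs
  imports "HOL-Analysis.Analysis" "HOL-Library.Extended_Real"
begin

definition chan :: "real \<Rightarrow> ('i \<Rightarrow> 'k \<Rightarrow> real) \<Rightarrow> ('i \<Rightarrow> real^2) \<Rightarrow> ('k \<Rightarrow> real^2) \<Rightarrow> 'i \<Rightarrow> 'k \<Rightarrow> real"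
  where "chan H omega s q i j = omega i j / (H^2 + (norm (q j - s i))^2)"

definition rate :: "'k set \<Rightarrow> real \<Rightarrow> real \<Rightarrow> ('i \<Rightarrow> 'k \<Rightarrow> real) \<Rightarrow> ('k \<Rightarrow> real)
    \<Rightarrow> ('i \<Rightarrow> real^2) \<Rightarrow> ('i \<Rightarrow> 'k \<Rightarrow> real) \<Rightarrow> ('k \<Rightarrow> real^2) \<Rightarrow> 'i \<Rightarrow> real"
  where "rate K H sigma2 omega p s c q i =
    (\<Sum>k\<in>K. c i k * log 2 (1 + p k * chan H omega s q i k /
        (sigma2 + (\<Sum>j\<in>K - {k}. p j * chan H omega s q i j))))"

definition Psi :: "'k set \<Rightarrow> 'i set \<Rightarrow> real \<Rightarrow> real \<Rightarrow> ('i \<Rightarrow> 'k \<Rightarrow> real) \<Rightarrow> ('k \<Rightarrow> real)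
    \<Rightarrow> ('i \<Rightarrow> real^2) \<Rightarrow> ('i \<Rightarrow> 'k \<Rightarrow> real) \<Rightarrow> ('i \<Rightarrow> real) \<Rightarrow> real \<Rightarrow> real \<Rightarrow> real
    \<Rightarrow> ('k \<Rightarrow> real^2) \<Rightarrow> ereal"
  where "Psi K I H sigma2 omega p s c a L B Vrho1 q =
    ereal (\<Sum>i\<in>I. a i * rate K H sigma2 omega p s c q i)
    - ereal Vrho1 * (\<Sum>i\<in>I. (if rate K H sigma2 omega p s c q i = 0 then \<infinity>
                            else ereal (L / (B * rate K H sigma2 omega p s c q i))))"

definition feasT :: "'k set \<Rightarrow> 'i set \<Rightarrow> ('i \<Rightarrow> real^2) \<Rightarrow> ('k \<Rightarrow> real^2) \<Rightarrow> real \<Rightarrow> real \<Rightarrow> real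
    \<Rightarrow> ('k \<Rightarrow> real^2) set"
  where "feasT K I s qbar Rcov dmin smax =
    {q. (\<forall>i\<in>I. \<forall>k\<in>K. norm (q k - s i) \<le> Rcov)
      \<and> (\<forall>k\<in>K. \<forall>j\<in>K. k \<noteq> j \<longrightarrow> (norm (q k - q j))^2 \<ge> dmin^2)
      \<and> (\<forall>k\<in>K. (norm (q k - qbar k))^2 \<le> smax^2)}"

definition OPT_T where
  "OPT_T K I H sigma2 omega p s c a L B Vrho1 qbar Rcov dmin smax =
    Sup (Psi K I H sigma2 omega p s c a L B Vrho1 ` feasT K I s qbar Rcov dmin smax)"

definition dr :: "real \<Rightarrow> ('i \<Rightarrow> real^2) \<Rightarrow> ('k \<Rightarrow> real^2) \<Rightarrow> 'i \<Rightarrow> 'k \<Rightarrow> real"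
  where "dr H s qr i j = H^2 + (norm (qr j - s i))^2"

definition Dr :: "'k set \<Rightarrow> real \<Rightarrow> real \<Rightarrow> ('i \<Rightarrow> 'k \<Rightarrow> real) \<Rightarrow> ('k \<Rightarrow> real)
    \<Rightarrow> ('i \<Rightarrow> real^2) \<Rightarrow> ('k \<Rightarrow> real^2) \<Rightarrow> 'i \<Rightarrow> real"
  where "Dr K H sigma2 omega p s qr i =
    log 2 (sigma2 + (\<Sum>j\<in>K. p j * omega i j / dr H s qr i j))"

definition Er :: "'k set \<Rightarrow> real \<Rightarrow> real \<Rightarrow> ('i \<Rightarrow> 'k \<Rightarrow> real) \<Rightarrow> ('k \<Rightarrow> real)
    \<Rightarrow> ('i \<Rightarrow> real^2) \<Rightarrow> ('k \<Rightarrow> real^2) \<Rightarrow> 'i \<Rightarrow> 'k \<Rightarrow> real"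
  where "Er K H sigma2 omega p s qr i j =
    p j * omega i j / ((dr H s qr i j)^2 * 2 powr (Dr K H sigma2 omega p s qr i) * ln 2)"

definition Lam :: "'k set \<Rightarrow> real \<Rightarrow> real \<Rightarrow> ('i \<Rightarrow> 'k \<Rightarrow> real) \<Rightarrow> ('k \<Rightarrow> real)
    \<Rightarrow> ('i \<Rightarrow> 'k \<Rightarrow> real) \<Rightarrow> 'i \<Rightarrow> 'k \<Rightarrow> real"
  where "Lam K H sigma2 omega p b i k =
    - log 2 (sigma2 + (\<Sum>j\<in>K - {k}. p j * omega i j / (H^2 + b i j)))"

definition feasC :: "'k set \<Rightarrow> 'i set \<Rightarrow> real \<Rightarrow> real \<Rightarrow> ('i \<Rightarrow> 'k \<Rightarrow> real) \<Rightarrow> ('k \<Rightarrow> real)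
    \<Rightarrow> ('i \<Rightarrow> real^2) \<Rightarrow> ('i \<Rightarrow> 'k \<Rightarrow> real) \<Rightarrow> real \<Rightarrow> real \<Rightarrow> ('k \<Rightarrow> real^2)
    \<Rightarrow> ('k \<Rightarrow> real^2) \<Rightarrow> real \<Rightarrow> real \<Rightarrow> real
    \<Rightarrow> (('k \<Rightarrow> real^2) \<times> ('i \<Rightarrow> real) \<times> ('i \<Rightarrow> real) \<times> ('i \<Rightarrow> 'k \<Rightarrow> real)) set"
  where "feasC K I H sigma2 omega p s c L B qr qbar Rcov dmin smax =
    {(q, eta, xi, b).
        (\<forall>i\<in>I. \<forall>j\<in>K. b i j > - (H^2))
      \<and> (\<forall>i\<in>I. xi i \<ge> 0 \<and> eta i \<ge> 0 \<and> xi i * eta i \<ge> L / B)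
      \<and> (\<forall>i\<in>I. (\<Sum>k\<in>K. c i k * (Dr K H sigma2 omega p s qr i
                 - (\<Sum>j\<in>K. Er K H sigma2 omega p s qr i j *
                       ((norm (q j - s i))^2 - (norm (qr j - s i))^2))))
               + (\<Sum>k\<in>K. c i k * Lam K H sigma2 omega p b i k) \<ge> eta i)
      \<and> (\<forall>i\<in>I. \<forall>j\<in>K. b i j \<le> - ((norm (qr j - s i))^2) + 2 * ((qr j - s i) \<bullet> (q j - s i)))
      \<and> (\<forall>k\<in>K. \<forall>j\<in>K. k \<noteq> j \<longrightarrow>
           dmin^2 \<le> - ((norm (qr k - qr j))^2) + 2 * ((qr k - qr j) \<bullet> (q k - q j)))
      \<and> (\<forall>i\<in>I. \<forall>k\<in>K. norm (q k - s i) \<le> Rcov)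
      \<and> (\<forall>k\<in>K. norm (q k - qbar k) \<le> smax)}"

definition objC :: "'i set \<Rightarrow> ('i \<Rightarrow> real) \<Rightarrow> real
    \<Rightarrow> (('k \<Rightarrow> real^2) \<times> ('i \<Rightarrow> real) \<times> ('i \<Rightarrow> real) \<times> ('i \<Rightarrow> 'k \<Rightarrow> real)) \<Rightarrow> ereal"
  where "objC I a Vrho1 x = (case x of (q, eta, xi, b) \<Rightarrow>
    ereal ((\<Sum>i\<in>I. a i * eta i) - Vrho1 * (\<Sum>i\<in>I. xi i)))"

text \<open>Sup over the empty set of ereal is -infinity (infeasible case).\<close>
definition OPT_C where
  "OPT_C K I H sigma2 omega p s c a L B Vrho1 qr qbar Rcov dmin smax =
    Sup (objC I a Vrho1 ` feasC K I H sigma2 omega p s c L B qr qbar Rcov dmin smax)"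

end

theory Submission
  imports Defs
begin

lemma key_ineq:
  fixes K :: "'k set" and sg :: real and a y d :: "'k \<Rightarrow> real"
  assumes fin: "finite K" and sg: "sg > 0" and a: "\<forall>j\<in>K. a j \<ge> 0"
    and y: "\<forall>j\<in>K. y j > 0" and d: "\<forall>j\<in>K. d j > 0"
  shows "(sg + (\<Sum>j\<in>K. a j / d j))^2 \<le> (sg + (\<Sum>j\<in>K. a j / y j)) * (sg + (\<Sum>j\<in>K. a j * y j / (d j)^2))"
proof -
  define Sr where "Sr = sg + (\<Sum>j\<in>K. a j / d j)"
  define S where "S = sg + (\<Sum>j\<in>K. a j / y j)"
  define W where "W = sg + (\<Sum>j\<in>K. a j * y j / (d j)^2)"
  have Spos: "S > 0" unfolding S_def using sg a y
    by (smt (verit) divide_nonneg_pos sum_nonneg)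
  have pt: "a j * y j / (d j)^2 \<ge> 2 * Sr / S * (a j / d j) - (Sr/S)^2 * (a j / y j)" if "j \<in> K" for j
  proof -
    have yj: "y j > 0" and dj: "d j > 0" using y d that by auto
    have "a j * y j / (d j)^2 - (2 * Sr / S * (a j / d j) - (Sr/S)^2 * (a j / y j))
          = a j / y j * (y j / d j - Sr / S)^2"
      using yj dj Spos by (simp add: field_simps power2_eq_square)
    also have "\<dots> \<ge> 0" using a that yj by simp
    finally show ?thesis by simp
  qed
  have p0: "sg \<ge> 2 * Sr / S * sg - (Sr/S)^2 * sg"
  proof -
    have "sg - (2 * Sr / S * sg - (Sr/S)^2 * sg) = sg * (1 - Sr/S)^2" using Spos by (simp add: field_simps power2_eq_square)
    also have "\<dots> \<ge> 0" using sg by simp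
    finally show ?thesis by simp
  qed
  have "W \<ge> 2 * Sr / S * Sr - (Sr/S)^2 * S"
  proof -
    have "2 * Sr / S * (\<Sum>j\<in>K. a j / d j) - (Sr/S)^2 * (\<Sum>j\<in>K. a j / y j)
        = (\<Sum>j\<in>K. 2 * Sr / S * (a j / d j) - (Sr/S)^2 * (a j / y j))"
      by (simp add: sum_subtractf sum_distrib_left)
    also have "\<dots> \<le> (\<Sum>j\<in>K. a j * y j / (d j)^2)"
      using pt by (rule sum_mono)
    finally have z: "2 * Sr / S * (\<Sum>j\<in>K. a j / d j) - (Sr/S)^2 * (\<Sum>j\<in>K. a j / y j) \<le> (\<Sum>j\<in>K. a j * y j / (d j)^2)" .
    have "2 * Sr / S * Sr - (Sr/S)^2 * S = (2 * Sr / S * (\<Sum>j\<in>K. a j / d j) - (Sr/S)^2 * (\<Sum>j\<in>K. a j / y j)) + (2 * Sr / S * sg - (Sr/S)^2 * sg)"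
      unfolding S_def Sr_def by (simp only: algebra_simps)
    thus ?thesis using z p0 unfolding W_def by linarith
  qed
  hence "W \<ge> Sr^2 / S" using Spos by (simp add: field_simps power2_eq_square)
  hence "Sr^2 \<le> S * W" using Spos by (simp add: field_simps)
  thus ?thesis unfolding Sr_def S_def W_def .
qed

lemma tangent:
  fixes K :: "'k set" and sg :: real and a y d :: "'k \<Rightarrow> real"
  assumes fin: "finite K" and sg: "sg > 0" and a: "\<forall>j\<in>K. a j \<ge> 0"
    and y: "\<forall>j\<in>K. y j > 0" and d: "\<forall>j\<in>K. d j > 0"
  shows "log 2 (sg + (\<Sum>j\<in>K. a j / d j))
     - (\<Sum>j\<in>K. a j / ((d j)^2 * (sg + (\<Sum>j\<in>K. a j / d j)) * ln 2) * (y j - d j))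
     \<le> log 2 (sg + (\<Sum>j\<in>K. a j / y j))"
proof -
  define Sr where "Sr = sg + (\<Sum>j\<in>K. a j / d j)"
  define S where "S = sg + (\<Sum>j\<in>K. a j / y j)"
  define W where "W = sg + (\<Sum>j\<in>K. a j * y j / (d j)^2)"
  have Spos: "S > 0" unfolding S_def using sg a y
    by (smt (verit) divide_nonneg_pos sum_nonneg)
  have Srpos: "Sr > 0" unfolding Sr_def using sg a d
    by (smt (verit) divide_nonneg_pos sum_nonneg)
  have k: "Sr^2 \<le> S * W" using key_ineq[OF assms] unfolding Sr_def S_def W_def .
  have l1: "ln S - ln Sr \<ge> 1 - Sr / S"
    using ln_diff_le[OF Srpos Spos] Spos by (simp add: field_simps)
  have "Sr / S \<le> W / Sr" using k Spos Srpos by (simp add: field_simps power2_eq_square)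
  hence l2: "ln S - ln Sr \<ge> 1 - W / Sr" using l1 by linarith
  have sumeq: "(\<Sum>j\<in>K. a j / ((d j)^2 * Sr * ln 2) * (y j - d j)) = (W - Sr) / (Sr * ln 2)"
  proof -
    have "(\<Sum>j\<in>K. a j / ((d j)^2 * Sr * ln 2) * (y j - d j))
        = (\<Sum>j\<in>K. (a j * y j / (d j)^2 - a j / d j) / (Sr * ln 2))"
      using d by (intro sum.cong) (auto simp: field_simps power2_eq_square)
    also have "\<dots> = ((\<Sum>j\<in>K. a j * y j / (d j)^2) - (\<Sum>j\<in>K. a j / d j)) / (Sr * ln 2)"
      by (simp add: sum_subtractf flip: sum_divide_distrib)
    also have "\<dots> = (W - Sr) / (Sr * ln 2)" unfolding W_def Sr_def by simp
    finally show ?thesis .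
  qed
  have "log 2 Sr - (W - Sr) / (Sr * ln 2) \<le> log 2 S"
  proof -
    have "(W - Sr) / (Sr * ln 2) = (W / Sr - 1) / ln 2" using Srpos by (simp add: field_simps)
    moreover have "log 2 S - log 2 Sr = (ln S - ln Sr) / ln 2" by (simp add: log_def diff_divide_distrib)
    moreover have "(W / Sr - 1) / ln 2 \<ge> - ((ln S - ln Sr) / ln 2)"
    proof -
      have "W / Sr - 1 \<ge> - (ln S - ln Sr)" using l2 by linarith
      hence "(W / Sr - 1) / ln 2 \<ge> (- (ln S - ln Sr)) / ln 2" by (rule divide_right_mono) simp
      thus ?thesis by (simp add: minus_divide_left)
    qed
    ultimately show ?thesis by linarith
  qed
  thus ?thesis using sumeq unfolding Sr_def S_def by simp
qed


lemma rate_bound: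
  fixes K :: "'k set" and I :: "'i set"
    and H sigma2 L B Vrho1 Rcov dmin smax :: real
    and omega :: "'i \<Rightarrow> 'k \<Rightarrow> real" and p :: "'k \<Rightarrow> real"
    and s :: "'i \<Rightarrow> real^2" and qbar qr :: "'k \<Rightarrow> real^2"
    and c :: "'i \<Rightarrow> 'k \<Rightarrow> real"
  assumes fin: "finite K" and H: "H > 0" and sg: "sigma2 > 0"
    and om: "\<forall>j\<in>K. omega i j > 0"
    and pp: "\<forall>j\<in>K. p j \<ge> 0"
    and cc: "\<forall>k\<in>K. c i k \<in> {0, 1}"
    and bpos: "\<forall>j\<in>K. b i j > - (H^2)"
    and bq: "\<forall>j\<in>K. b i j \<le> - ((norm (qr j - s i))^2) + 2 * ((qr j - s i) \<bullet> (q j - s i))"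
    and et: "(\<Sum>k\<in>K. c i k * (Dr K H sigma2 omega p s qr i
                 - (\<Sum>j\<in>K. Er K H sigma2 omega p s qr i j *
                       ((norm (q j - s i))^2 - (norm (qr j - s i))^2))))
               + (\<Sum>k\<in>K. c i k * Lam K H sigma2 omega p b i k) \<ge> eta"
  shows "eta \<le> rate K H sigma2 omega p s c q i"
proof -
  define y where "y j = H^2 + (norm (q j - s i))^2" for j
  define d where "d j = dr H s qr i j" for j
  define a where "a j = p j * omega i j" for j
  have H2: "H^2 > 0" using H by simp
  have ypos: "\<forall>j\<in>K. y j > 0" unfolding y_def using H2 by (smt (verit) zero_le_power2)
  have dpos: "\<forall>j\<in>K. d j > 0" unfolding d_def dr_def using H2 by (smt (verit) zero_le_power2)
  have apos: "\<forall>j\<in>K. a j \<ge> 0" unfolding a_def using om pp by (simp add: less_imp_le)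
  define Sr where "Sr = sigma2 + (\<Sum>j\<in>K. a j / d j)"
  have Srpos: "Sr > 0" unfolding Sr_def using sg apos dpos
    by (smt (verit) divide_nonneg_pos sum_nonneg)
  have Dr_eq: "Dr K H sigma2 omega p s qr i = log 2 Sr"
    unfolding Dr_def Sr_def a_def d_def by simp
  have Er_eq: "Er K H sigma2 omega p s qr i j = a j / ((d j)^2 * Sr * ln 2)" for j
    unfolding Er_def using Dr_eq Srpos by (simp add: a_def d_def)
  define T where "T = Dr K H sigma2 omega p s qr i
                 - (\<Sum>j\<in>K. Er K H sigma2 omega p s qr i j *
                       ((norm (q j - s i))^2 - (norm (qr j - s i))^2))"
  define Stot where "Stot = sigma2 + (\<Sum>j\<in>K. a j / y j)"
  have T_le: "T \<le> log 2 Stot"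
  proof -
    have "T = log 2 (sigma2 + (\<Sum>j\<in>K. a j / d j))
     - (\<Sum>j\<in>K. a j / ((d j)^2 * (sigma2 + (\<Sum>j\<in>K. a j / d j)) * ln 2) * (y j - d j))"
      unfolding T_def Dr_eq Er_eq Sr_def y_def d_def dr_def by simp
    also have "\<dots> \<le> log 2 Stot" unfolding Stot_def by (rule tangent[OF fin sg apos ypos dpos])
    finally show ?thesis .
  qed
  have chan_eq: "p j * chan H omega s q i j = a j / y j" for j
    unfolding chan_def a_def y_def by simp
  define Sk where "Sk k = sigma2 + (\<Sum>j\<in>K - {k}. a j / y j)" for k
  have Skpos: "Sk k > 0" for k unfolding Sk_def using sg apos ypos
    by (smt (verit) DiffD1 divide_nonneg_pos sum_nonneg)
  have Lam_le: "Lam K H sigma2 omega p b i k \<le> - log 2 (Sk k)" for k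
  proof -
    have "(\<Sum>j\<in>K - {k}. a j / y j) \<le> (\<Sum>j\<in>K - {k}. p j * omega i j / (H^2 + b i j))"
    proof (rule sum_mono)
      fix j assume j: "j \<in> K - {k}"
      have "b i j \<le> (norm (q j - s i))^2"
      proof -
        have "0 \<le> (norm ((q j - s i) - (qr j - s i)))^2" by simp
        also have "\<dots> = (norm (q j - s i))^2 - 2 * ((qr j - s i) \<bullet> (q j - s i)) + (norm (qr j - s i))^2"
          by (simp add: power2_norm_eq_inner inner_diff_left inner_diff_right inner_commute)
        finally show ?thesis using bq j by force
      qed
      moreover have "H^2 + b i j > 0" using bpos j by force
      ultimately show "a j / y j \<le> p j * omega i j / (H^2 + b i j)"
        unfolding a_def y_def using apos j a_def
        by (intro divide_left_mono) (auto simp: a_def)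
    qed
    hence "log 2 (Sk k) \<le> log 2 (sigma2 + (\<Sum>j\<in>K - {k}. p j * omega i j / (H^2 + b i j)))"
      using Skpos[of k] unfolding Sk_def by simp
    thus ?thesis unfolding Lam_def by simp
  qed
  have rate_eq: "rate K H sigma2 omega p s c q i = (\<Sum>k\<in>K. c i k * (log 2 Stot - log 2 (Sk k)))"
    unfolding rate_def
  proof (rule sum.cong[OF refl])
    fix k assume k: "k \<in> K"
    have st: "Stot = Sk k + a k / y k"
      unfolding Stot_def Sk_def using sum.remove[OF fin k, of "\<lambda>j. a j / y j"] by simp
    have "1 + p k * chan H omega s q i k / (sigma2 + (\<Sum>j\<in>K - {k}. p j * chan H omega s q i j))
        = Stot / Sk k"
      unfolding chan_eq Sk_def[symmetric] st using Skpos[of k] by (simp add: field_simps)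
    moreover have "log 2 (Stot / Sk k) = log 2 Stot - log 2 (Sk k)"
    proof -
      have "a k / y k \<ge> 0" using apos ypos k by (simp add: less_imp_le)
      hence "Stot > 0" using st Skpos[of k] by linarith
      thus ?thesis using Skpos[of k] by (rule log_divide_pos)
    qed
    ultimately show "c i k * log 2 (1 + p k * chan H omega s q i k / (sigma2 + (\<Sum>j\<in>K - {k}. p j * chan H omega s q i j)))
      = c i k * (log 2 Stot - log 2 (Sk k))" by simp
  qed
  have "eta \<le> (\<Sum>k\<in>K. c i k * (T + Lam K H sigma2 omega p b i k))"
    using et unfolding T_def by (simp add: distrib_left sum.distrib)
  also have "\<dots> \<le> (\<Sum>k\<in>K. c i k * (log 2 Stot - log 2 (Sk k)))"
  proof (rule sum_mono)
    fix k assume "k \<in> K"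
    hence "c i k \<ge> 0" using cc by auto
    thus "c i k * (T + Lam K H sigma2 omega p b i k) \<le> c i k * (log 2 Stot - log 2 (Sk k))"
      using T_le Lam_le[of k] by (intro mult_left_mono) auto
  qed
  finally show ?thesis using rate_eq by simp
qed

theorem lemma2:
  fixes K :: "'k set" and I :: "'i set"
    and H sigma2 L B Vrho1 Rcov dmin smax :: real
    and omega :: "'i \<Rightarrow> 'k \<Rightarrow> real" and p :: "'k \<Rightarrow> real"
    and s :: "'i \<Rightarrow> real^2" and qbar qr :: "'k \<Rightarrow> real^2"
    and c :: "'i \<Rightarrow> 'k \<Rightarrow> real" and a :: "'i \<Rightarrow> real"
  assumes "finite K" and "finite I"
    and "H > 0" and "sigma2 > 0"
    and "\<forall>i\<in>I. \<forall>j\<in>K. omega i j > 0"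
    and "\<forall>j\<in>K. p j \<ge> 0"
    and "\<forall>i\<in>I. \<forall>k\<in>K. c i k \<in> {0, 1}"
    and "\<forall>i\<in>I. (\<Sum>k\<in>K. c i k) \<le> 1"
    and "\<forall>k\<in>K. (\<Sum>i\<in>I. c i k) \<le> 1"
    and "L > 0" and "B > 0" and "Vrho1 \<ge> 0"
    and "\<forall>i\<in>I. a i \<ge> 0"
    and "Rcov > 0" and "dmin > 0" and "smax > 0"
  shows "OPT_C K I H sigma2 omega p s c a L B Vrho1 qr qbar Rcov dmin smax
         \<le> OPT_T K I H sigma2 omega p s c a L B Vrho1 qbar Rcov dmin smax"
proof -
  note A = assms
  show ?thesis
  unfolding OPT_C_def OPT_T_def
  proof (rule Sup_mono)
    fix u assume "u \<in> objC I a Vrho1 ` feasC K I H sigma2 omega p s c L B qr qbar Rcov dmin smax"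
    then obtain q eta xi b where x: "(q,eta,xi,b) \<in> feasC K I H sigma2 omega p s c L B qr qbar Rcov dmin smax"
      and u: "u = objC I a Vrho1 (q,eta,xi,b)" by auto
    from x have f1: "\<forall>i\<in>I. \<forall>j\<in>K. b i j > - (H^2)"
      and f2: "\<forall>i\<in>I. xi i \<ge> 0 \<and> eta i \<ge> 0 \<and> xi i * eta i \<ge> L / B"
      and f3: "\<forall>i\<in>I. (\<Sum>k\<in>K. c i k * (Dr K H sigma2 omega p s qr i
                 - (\<Sum>j\<in>K. Er K H sigma2 omega p s qr i j *
                       ((norm (q j - s i))^2 - (norm (qr j - s i))^2))))
               + (\<Sum>k\<in>K. c i k * Lam K H sigma2 omega p b i k) \<ge> eta i"
      and f4: "\<forall>i\<in>I. \<forall>j\<in>K. b i j \<le> - ((norm (qr j - s i))^2) + 2 * ((qr j - s i) \<bullet> (q j - s i))"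
      and f5: "\<forall>k\<in>K. \<forall>j\<in>K. k \<noteq> j \<longrightarrow>
           dmin^2 \<le> - ((norm (qr k - qr j))^2) + 2 * ((qr k - qr j) \<bullet> (q k - q j))"
      and f6: "\<forall>i\<in>I. \<forall>k\<in>K. norm (q k - s i) \<le> Rcov"
      and f7: "\<forall>k\<in>K. norm (q k - qbar k) \<le> smax"
      unfolding feasC_def by auto
    have qT: "q \<in> feasT K I s qbar Rcov dmin smax"
      unfolding feasT_def
    proof (intro CollectI conjI ballI impI)
      fix i k assume "i \<in> I" "k \<in> K" thus "norm (q k - s i) \<le> Rcov" using f6 by auto
    next
      fix k j assume kj: "k \<in> K" "j \<in> K" "k \<noteq> j"
      have "0 \<le> (norm ((q k - q j) - (qr k - qr j)))^2" by simp
      also have "\<dots> = (norm (q k - q j))^2 - 2 * ((qr k - qr j) \<bullet> (q k - q j)) + (norm (qr k - qr j))^2"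
        by (simp add: power2_norm_eq_inner inner_diff_left inner_diff_right inner_commute)
      finally show "dmin^2 \<le> (norm (q k - q j))^2" using f5 kj by force
    next
      fix k assume "k \<in> K"
      hence "norm (q k - qbar k) \<le> smax" using f7 by auto
      thus "(norm (q k - qbar k))^2 \<le> smax^2" by (intro power_mono) auto
    qed
    define r where "r i = rate K H sigma2 omega p s c q i" for i
    have rb: "eta i \<le> r i" if i: "i \<in> I" for i
      unfolding r_def
      by (rule rate_bound[where b = b and qr = qr]) (use A f1 f3 f4 i in auto)
    have LB: "L / B > 0" using A by simp
    have etapos: "eta i > 0" if i: "i \<in> I" for i
    proof -
      have "xi i * eta i > 0" using f2 i LB by force
      moreover have "eta i \<ge> 0" using f2 i by auto
      ultimately show ?thesis using f2 i by (cases "eta i = 0") auto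
    qed
    have rpos: "r i > 0" if "i \<in> I" for i using rb[OF that] etapos[OF that] by linarith
    have xib: "xi i \<ge> L / (B * r i)" if i: "i \<in> I" for i
    proof -
      have "xi i * r i \<ge> xi i * eta i" using f2 i rb[OF i] by (intro mult_left_mono) auto
      moreover have "xi i * eta i \<ge> L / B" using f2 i by blast
      ultimately have "xi i * r i \<ge> L / B" by linarith
      thus ?thesis using rpos[OF i] A by (simp add: field_simps)
    qed
    have Psi_eq: "Psi K I H sigma2 omega p s c a L B Vrho1 q
       = ereal ((\<Sum>i\<in>I. a i * r i) - Vrho1 * (\<Sum>i\<in>I. L / (B * r i)))"
    proof -
      have "(\<Sum>i\<in>I. (if r i = 0 then \<infinity> else ereal (L / (B * r i)))) = (\<Sum>i\<in>I. ereal (L / (B * r i)))"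
        using rpos by (intro sum.cong) force+
      also have "\<dots> = ereal (\<Sum>i\<in>I. L / (B * r i))" by simp
      finally show ?thesis unfolding Psi_def r_def[symmetric] by simp
    qed
    have "(\<Sum>i\<in>I. a i * eta i) - Vrho1 * (\<Sum>i\<in>I. xi i)
        \<le> (\<Sum>i\<in>I. a i * r i) - Vrho1 * (\<Sum>i\<in>I. L / (B * r i))"
    proof -
      have "(\<Sum>i\<in>I. a i * eta i) \<le> (\<Sum>i\<in>I. a i * r i)"
        using A rb by (intro sum_mono mult_left_mono) auto
      moreover have "Vrho1 * (\<Sum>i\<in>I. L / (B * r i)) \<le> Vrho1 * (\<Sum>i\<in>I. xi i)"
        using A xib by (intro sum_mono mult_left_mono) auto
      ultimately show ?thesis by linarith
    qed
    hence "u \<le> Psi K I H sigma2 omega p s c a L B Vrho1 q"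
      unfolding u Psi_eq objC_def by simp
    thus "\<exists>z\<in>Psi K I H sigma2 omega p s c a L B Vrho1 ` feasT K I s qbar Rcov dmin smax. u \<le> z"
      using qT by blast
  qed
qed

end
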